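(* Assume $\langle f\rangle_X=0$, $N/p\in\mathbb N$, and that $\psi$ satisfies (A1) and (A2). Then there exists a constant $C_3$, depending only on $c_\psi,C_\psi,C'_\psi$ and $p$ (in particular independent of $\epsilon$ and $f$), such that \[ \|u^0-u\|_{L^2}\le C_3\,\epsilon\,\|f\|_{L^2}, \] where $u$ solves the atomistic problem and $u^0$ solves the homogenized problem.
   Context: Let $\epsilon>0$ and $N,p$ be positive integers, with the normalization $N\epsilon=1$. Set $X_i=\epsilon i$ ($i\in\mathbb Z$) and $Y_j=j$. $U^N_{\rm per}(\epsilon\mathbb Z)$ is the space of functions $u:\epsilon\mathbb Z\to\mathbb R$ with $u(X_{i+N})=u(X_i)$ for all $i$; $U^N_\#(\epsilon\mathbb Z)$ is the subspace with $\langle u\rangle_X:=\frac1N\sum_{i=1}^N u(X_i)=0$. For $u,v\in U^N_{\rm per}(\epsilon\mathbb Z)$: $\langle u,v\rangle_X=\frac1N\sum_{i=1}^N u(X_i)v(X_i)$, $Du(X_i)=(u(X_{i+1})-u(X_i))/\epsilon$, $\|u\|_{L^2}=(\frac1N\sum_{i=1}^N|u(X_i)|^2)^{1/2}$. A two-scale function is $g:\epsilon\mathbb Z\times\mathbb Z\to\mathbb R$ with $g(X_{i+N},Y_j)=g(X_i,Y_j)=g(X_i,Y_{j+p})$; set $D_Xg(X_i,Y_j)=(g(X_{i+1},Y_j)-g(X_i,Y_j))/\epsilon$, $\langle g\rangle_Y(X_i)=\frac1p\sum_{j=1}^p g(X_i,Y_j)$, $\|g\|_{L^\infty(N,p)}=\max_{1\le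 i\le N,1\le j\le p}|g(X_i,Y_j)|$. $\psi$ is a two-scale function satisfying (A1) $0<c_\psi\le\psi(X_i,Y_j)\le C_\psi$ for all $i,j$, and (A2) $\|D_X\psi\|_{L^\infty(N,p)}\le C'_\psi$. Define $\psi^\epsilon(X_i)=\psi(X_i,X_i/\epsilon)$ and $\psi^0(X_i)=\langle1/\psi(X_i,\cdot)\rangle_Y^{-1}$. $f\in U^N_{\rm per}(\epsilon\mathbb Z)$. Atomistic problem: $u\in U^N_\#(\epsilon\mathbb Z)$ with $\langle\psi^\epsilon Du,Dv\rangle_X=\langle f,v\rangle_X$ for all $v\in U^N_{\rm per}(\epsilon\mathbb Z)$. Homogenized problem: $u^0\in U^N_\#(\epsilon\mathbb Z)$ with $\langle\psi^0Du^0,Dv\rangle_X=\langle f,v\rangle_X$ for all $v\in U^N_{\rm per}(\epsilon\mathbb Z)$. *)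

theory Defs
  imports Complex_Main
begin

(* Lattice epsilon Z is indexed by i :: int, X_i = eps * i.  A function
   u on eps Z is represented by  u :: int => real  with u i = u(X_i).
   A two-scale function g on eps Z x Z is  g :: int => int => real,
   g i j = g(X_i, Y_j). *)

definition per_X :: "nat \<Rightarrow> (int \<Rightarrow> real) \<Rightarrow> bool" where
  "per_X N u \<longleftrightarrow> (\<forall>i. u (i + int N) = u i)"

definition avg_X :: "nat \<Rightarrow> (int \<Rightarrow> real) \<Rightarrow> real" where
  "avg_X N u = (1 / real N) * (\<Sum>i=1..int N. u i)"

definition inner_X :: "nat \<Rightarrow> (int \<Rightarrow> real) \<Rightarrow> (int \<Rightarrow> real) \<Rightarrow> real" where
  "inner_X N u v = (1 / real N) * (\<Sum>i=1..int N. u i * v i)"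

definition Dfw :: "real \<Rightarrow> (int \<Rightarrow> real) \<Rightarrow> int \<Rightarrow> real" where
  "Dfw eps u i = (u (i + 1) - u i) / eps"

definition L2_X :: "nat \<Rightarrow> (int \<Rightarrow> real) \<Rightarrow> real" where
  "L2_X N u = sqrt ((1 / real N) * (\<Sum>i=1..int N. \<bar>u i\<bar>^2))"

definition two_scale :: "nat \<Rightarrow> nat \<Rightarrow> (int \<Rightarrow> int \<Rightarrow> real) \<Rightarrow> bool" where
  "two_scale N p g \<longleftrightarrow> (\<forall>i j. g (i + int N) j = g i j \<and> g i (j + int p) = g i j)"

definition D_X :: "real \<Rightarrow> (int \<Rightarrow> int \<Rightarrow> real) \<Rightarrow> int \<Rightarrow> int \<Rightarrow> real" where
  "D_X eps g i j = (g (i + 1) j - g i j) / eps"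

definition avg_Y :: "nat \<Rightarrow> (int \<Rightarrow> int \<Rightarrow> real) \<Rightarrow> int \<Rightarrow> real" where
  "avg_Y p g i = (1 / real p) * (\<Sum>j=1..int p. g i j)"

definition Linf_Np :: "nat \<Rightarrow> nat \<Rightarrow> (int \<Rightarrow> int \<Rightarrow> real) \<Rightarrow> real" where
  "Linf_Np N p g = Max ((\<lambda>(i, j). \<bar>g i j\<bar>) ` ({1..int N} \<times> {1..int p}))"

(* psi^eps(X_i) = psi(X_i, X_i/eps) = psi(X_i, Y_i) *)
definition psi_eps :: "(int \<Rightarrow> int \<Rightarrow> real) \<Rightarrow> int \<Rightarrow> real" where
  "psi_eps psi i = psi i i"

definition psi_0 :: "nat \<Rightarrow> (int \<Rightarrow> int \<Rightarrow> real) \<Rightarrow> int \<Rightarrow> real" where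
  "psi_0 p psi i = inverse (avg_Y p (\<lambda>i j. 1 / psi i j) i)"

definition solves :: "nat \<Rightarrow> real \<Rightarrow> (int \<Rightarrow> real) \<Rightarrow> (int \<Rightarrow> real) \<Rightarrow> (int \<Rightarrow> real) \<Rightarrow> bool" where
  "solves N eps a f u \<longleftrightarrow> per_X N u \<and> avg_X N u = 0 \<and>
     (\<forall>v. per_X N v \<longrightarrow>
        inner_X N (\<lambda>i. a i * Dfw eps u i) (Dfw eps v) = inner_X N f v)"

end

theory Submission
  imports Defs
begin


lemma per_mod_nat:
  fixes P :: "nat \<Rightarrow> real"
  assumes "\<And>j. P (j + p) = P j"
  shows "P j = P (j mod p)"
proof -
  have "P (r + q*p) = P r" for r q
  proof (induction q)
    case (Suc q)
    have "P (r + Suc q * p) = P ((r + q*p) + p)" by (simp add: algebra_simps)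
    also have "\<dots> = P r" using assms Suc by simp
    finally show ?case .
  qed simp
  from this[of "j mod p" "j div p"] show ?thesis by simp
qed

lemma sum_by_parts_nat:
  fixes t F :: "nat \<Rightarrow> real"
  shows "(\<Sum>k<n. t k * (F (Suc k) - F k)) = t n * F n - t 0 * F 0 - (\<Sum>k<n. (t (Suc k) - t k) * F (Suc k))"
  by (induction n) (simp_all add: algebra_simps)

lemma core:
  fixes P :: "nat \<Rightarrow> nat \<Rightarrow> real" and t :: "nat \<Rightarrow> real"
  assumes p: "0 < p"
   and perP: "\<And>s j. P s (j + p) = P s j"
   and R: "\<And>s j. \<bar>P s j\<bar> \<le> R"
   and Lip: "\<And>s j. \<bar>P (Suc s) j - P s j\<bar> \<le> \<delta>"
   and T: "\<And>k. k \<le> n \<Longrightarrow> \<bar>t k\<bar> \<le> T"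
   and V: "(\<Sum>k<n. \<bar>t (Suc k) - t k\<bar>) \<le> V"
  shows "\<bar>\<Sum>k<n. t k * ((\<Sum>j<p. P k j)/p - P k k)\<bar> \<le> 2*real p*R*(2*T+V) + 2*n*p*\<delta>*T"
proof -
  define A where "A s = (\<Sum>j<p. P s j)/p" for s
  define \<chi> where "\<chi> s j = (\<Sum>l<j mod p. A s - P s l)" for s j
  have Asum: "(\<Sum>l<p. A s - P s l) = 0" for s
    using p by (simp add: sum_subtractf A_def)
  have step: "\<chi> s (Suc j) - \<chi> s j = A s - P s j" for s j
  proof (cases "Suc (j mod p) < p")
    case True
    then have "Suc j mod p = Suc (j mod p)" by (simp add: mod_Suc)
    then show ?thesis using per_mod_nat[of "P s" p j] perP by (simp add: \<chi>_def)
  next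
    case False
    have "j mod p < p" using p by simp
    then have jm: "j mod p = p - 1" using False by linarith
    then have "Suc j mod p = 0" using p False by (simp add: mod_Suc)
    moreover have "(\<Sum>l<p. A s - P s l) = (\<Sum>l<p-1. A s - P s l) + (A s - P s (p-1))"
    proof -
      have "p = Suc (p-1)" using p by simp
      then show ?thesis by (metis sum.lessThan_Suc)
    qed
    moreover have "P s j = P s (p-1)" using per_mod_nat[of "P s" p j] perP jm by simp
    ultimately show ?thesis using Asum jm by (simp add: \<chi>_def)
  qed
  have Ab: "\<bar>A s\<bar> \<le> R" for s
  proof -
    have "\<bar>\<Sum>j<p. P s j\<bar> \<le> (\<Sum>j<p. R)" by (rule order.trans[OF sum_abs]) (use sum_mono[of "{..<p}" "\<lambda>j. \<bar>P s j\<bar>" "\<lambda>_. R"] R in auto)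
    then show ?thesis using p by (simp add: A_def divide_le_eq mult.commute)
  qed
  have ALip: "\<bar>A (Suc s) - A s\<bar> \<le> \<delta>" for s
  proof -
    have "\<bar>\<Sum>j<p. P (Suc s) j - P s j\<bar> \<le> (\<Sum>j<p. \<delta>)" by (rule order.trans[OF sum_abs]) (use sum_mono[of "{..<p}" "\<lambda>j. \<bar>P (Suc s) j - P s j\<bar>" "\<lambda>_. \<delta>"] Lip in auto)
    then show ?thesis using p by (simp add: A_def divide_le_eq sum_subtractf diff_divide_distrib[symmetric] mult.commute)
  qed
  have chib: "\<bar>\<chi> s j\<bar> \<le> 2*real p*R" for s j
  proof -
    have "\<bar>\<chi> s j\<bar> \<le> (\<Sum>l<j mod p. \<bar>A s - P s l\<bar>)" unfolding \<chi>_def by (rule sum_abs)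
    also have "\<dots> \<le> (\<Sum>l<j mod p. 2*R)"
    proof (rule sum_mono)
      fix l show "\<bar>A s - P s l\<bar> \<le> 2*R"
        using Ab[of s] R[of s l] abs_triangle_ineq4[of "A s" "P s l"] by linarith
    qed
    also have "\<dots> \<le> (\<Sum>l<p. 2*R)"
    proof -
      have "j mod p \<le> p" using p by simp
      moreover have "0 \<le> R" using R[of 0 0] by simp
      ultimately show ?thesis by (simp add: mult_right_mono)
    qed
    finally show ?thesis by simp
  qed
  have chiLip: "\<bar>\<chi> s j - \<chi> (Suc s) j\<bar> \<le> 2*real p*\<delta>" for s j
  proof -
    have "\<bar>\<chi> s j - \<chi> (Suc s) j\<bar> = \<bar>\<Sum>l<j mod p. (A s - A (Suc s)) - (P s l - P (Suc s) l)\<bar>"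
      unfolding \<chi>_def by (simp add: sum_subtractf[symmetric] algebra_simps)
    also have "\<dots> \<le> (\<Sum>l<j mod p. \<bar>(A s - A (Suc s)) - (P s l - P (Suc s) l)\<bar>)" by (rule sum_abs)
    also have "\<dots> \<le> (\<Sum>l<j mod p. 2*\<delta>)"
    proof (rule sum_mono)
      fix l
      have a1: "\<bar>A s - A (Suc s)\<bar> \<le> \<delta>" using ALip[of s] by (simp add: abs_minus_commute)
      have a2: "\<bar>P s l - P (Suc s) l\<bar> \<le> \<delta>" using Lip[of s l] by (simp add: abs_minus_commute)
      show "\<bar>(A s - A (Suc s)) - (P s l - P (Suc s) l)\<bar> \<le> 2*\<delta>"
        using a1 a2 abs_triangle_ineq4[of "A s - A (Suc s)" "P s l - P (Suc s) l"] by linarith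
    qed
    also have "\<dots> \<le> (\<Sum>l<p. 2*\<delta>)"
    proof -
      have "j mod p \<le> p" using p by simp
      moreover have "0 \<le> \<delta>" using Lip[of 0 0] by simp
      ultimately show ?thesis by (simp add: mult_right_mono)
    qed
    finally show ?thesis by simp
  qed
  define \<Phi> where "\<Phi> k = \<chi> k k" for k
  define e where "e k = \<chi> k (Suc k) - \<chi> (Suc k) (Suc k)" for k
  have gk: "A k - P k k = (\<Phi> (Suc k) - \<Phi> k) + e k" for k
    using step[of k k] by (simp add: \<Phi>_def e_def)
  have T0: "0 \<le> T" using T[of 0] by simp
  have "(\<Sum>k<n. t k * ((\<Sum>j<p. P k j)/p - P k k)) =
     (\<Sum>k<n. t k * (\<Phi> (Suc k) - \<Phi> k)) + (\<Sum>k<n. t k * e k)"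
    by (simp add: A_def[symmetric] gk distrib_left sum.distrib)
  also have "\<dots> = (t n * \<Phi> n - t 0 * \<Phi> 0 - (\<Sum>k<n. (t (Suc k) - t k) * \<Phi> (Suc k))) + (\<Sum>k<n. t k * e k)"
    by (simp add: sum_by_parts_nat)
  finally have eq: "(\<Sum>k<n. t k * ((\<Sum>j<p. P k j)/p - P k k)) = \<dots>" .
  have b1: "\<bar>t n * \<Phi> n\<bar> \<le> T * (2*real p*R)"
    unfolding abs_mult by (rule mult_mono) (use T chib \<Phi>_def T0 in auto)
  have b2: "\<bar>t 0 * \<Phi> 0\<bar> \<le> T * (2*real p*R)"
    unfolding abs_mult by (rule mult_mono) (use T chib \<Phi>_def T0 in auto)
  have b3: "\<bar>\<Sum>k<n. (t (Suc k) - t k) * \<Phi> (Suc k)\<bar> \<le> V * (2*real p*R)"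
  proof -
    have "\<bar>\<Sum>k<n. (t (Suc k) - t k) * \<Phi> (Suc k)\<bar> \<le> (\<Sum>k<n. \<bar>t (Suc k) - t k\<bar> * (2*real p*R))"
      by (rule order.trans[OF sum_abs], rule sum_mono, unfold abs_mult)
         (rule mult_left_mono, auto simp: \<Phi>_def chib)
    also have "\<dots> \<le> V * (2*real p*R)"
    proof -
      have R0: "0 \<le> 2*real p*R" using R[of 0 0] by simp
      show ?thesis using mult_right_mono[OF V R0] by (simp add: sum_distrib_right[symmetric])
    qed
    finally show ?thesis .
  qed
  have b4: "\<bar>\<Sum>k<n. t k * e k\<bar> \<le> n * (T * (2*real p*\<delta>))"
  proof -
    have "\<bar>\<Sum>k<n. t k * e k\<bar> \<le> (\<Sum>k<n. T * (2*real p*\<delta>))"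
      by (rule order.trans[OF sum_abs], rule sum_mono, unfold abs_mult)
         (rule mult_mono, auto simp: e_def chiLip T T0)
    then show ?thesis by simp
  qed
  show ?thesis unfolding eq using b1 b2 b3 b4 by (simp add: algebra_simps)
qed


lemma per_int_mult:
  assumes "per_X N h" shows "h (i + k * int N) = h i"
proof (induction k rule: int_induct[where k=0])
  case (step1 k)
  have "h (i + (k+1) * int N) = h ((i + k * int N) + int N)" by (simp add: algebra_simps)
  also have "\<dots> = h (i + k * int N)" using assms by (simp add: per_X_def)
  finally show ?case using step1 by simp
next
  case (step2 k)
  have "h (i + k * int N) = h ((i + (k - 1) * int N) + int N)" by (simp add: algebra_simps)
  also have "\<dots> = h (i + (k-1) * int N)" using assms by (simp add: per_X_def)
  finally show ?case using step2 by simp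
qed simp

lemma per_rep:
  assumes "per_X N h" shows "h i = h ((i - 1) mod int N + 1)"
proof -
  have "i = ((i - 1) mod int N + 1) + ((i - 1) div int N) * int N" by simp
  then have "h i = h (((i - 1) mod int N + 1) + ((i - 1) div int N) * int N)" by simp
  also have "\<dots> = h ((i - 1) mod int N + 1)" by (rule per_int_mult[OF assms])
  finally show ?thesis .
qed

lemma per_rep_range:
  assumes "0 < N" shows "(i - 1) mod int N + 1 \<in> {1..int N}"
proof -
  have "0 \<le> (i - 1) mod int N" "(i - 1) mod int N < int N" using assms by simp_all
  then show ?thesis by simp
qed

lemma shift_nat:
  assumes "per_X N h" shows "(\<Sum>n<N. h (int n + 1)) = (\<Sum>n<N. h (int n))"
proof -
  have "(\<Sum>n<N. h (int (Suc n)) - h (int n)) = h (int N) - h (int 0)"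
    by (rule sum_lessThan_telescope)
  also have "\<dots> = 0"
  proof -
    have "h (0 + int N) = h 0" using assms unfolding per_X_def by blast
    then show ?thesis by simp
  qed
  finally show ?thesis by (simp add: sum_subtractf add.commute)
qed

lemma sum_conv:
  assumes "per_X N h" shows "(\<Sum>i=1..int N. h i) = (\<Sum>n<N. h (int n))"
proof -
  have img: "{1..int N} = (\<lambda>n. int n + 1) ` {..<N}"
  proof
    show "{1..int N} \<subseteq> (\<lambda>n. int n + 1) ` {..<N}"
    proof
      fix i assume "i \<in> {1..int N}"
      then have "i = int (nat (i - 1)) + 1" "nat (i - 1) < N" by auto
      then show "i \<in> (\<lambda>n. int n + 1) ` {..<N}" by blast
    qed
  qed auto
  have "(\<Sum>i=1..int N. h i) = (\<Sum>n<N. h (int n + 1))"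
    unfolding img by (subst sum.reindex) (auto simp: inj_on_def)
  also have "\<dots> = (\<Sum>n<N. h (int n))" by (rule shift_nat[OF assms])
  finally show ?thesis .
qed

lemma per_shift: "per_X N g \<Longrightarrow> per_X N (\<lambda>i. g (i + c))"
  unfolding per_X_def by (metis add.commute add.left_commute)

lemma per_mult: "per_X N g \<Longrightarrow> per_X N h \<Longrightarrow> per_X N (\<lambda>i. g i * h i)"
  unfolding per_X_def by simp
lemma per_diff: "per_X N g \<Longrightarrow> per_X N h \<Longrightarrow> per_X N (\<lambda>i. g i - h i)"
  unfolding per_X_def by simp
lemma per_comp: "per_X N g \<Longrightarrow> per_X N (\<lambda>i. F (g i))"
  unfolding per_X_def by simp
lemma per_Dfw: "per_X N g \<Longrightarrow> per_X N (Dfw eps g)"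
  unfolding per_X_def Dfw_def by (metis add.commute add.left_commute)

lemma weak_to_strong:
  assumes N: "0 < N" and e: "eps \<noteq> 0" and pa: "per_X N a" and pf: "per_X N f"
    and sol: "solves N eps a f u"
  shows "a (i - 1) * Dfw eps u (i - 1) - a i * Dfw eps u i = eps * f i"
proof -
  define \<sigma> where "\<sigma> i = a i * Dfw eps u i" for i
  have pu: "per_X N u" using sol by (simp add: solves_def)
  have ps: "per_X N \<sigma>" unfolding \<sigma>_def by (rule per_mult[OF pa per_Dfw[OF pu]])
  have psm: "per_X N (\<lambda>i. \<sigma> (i + -1))" by (rule per_shift[OF ps])
  define r where "r i = (\<sigma> (i - 1) - \<sigma> i) / eps - f i" for i
  have pr: "per_X N r" using psm ps pf unfolding r_def per_X_def by simp
  have weak: "inner_X N \<sigma> (Dfw eps r) = inner_X N f r"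
    using sol pr unfolding solves_def \<sigma>_def by blast
  have l: "(\<Sum>n<N. \<sigma> (int n) * r (int n + 1)) = (\<Sum>n<N. \<sigma> (int n - 1) * r (int n))"
  proof -
    have "per_X N (\<lambda>i. \<sigma> (i + -1) * r i)" by (rule per_mult[OF psm pr])
    from shift_nat[OF this] show ?thesis by simp
  qed
  have "(\<Sum>i=1..int N. \<sigma> i * Dfw eps r i) = (\<Sum>n<N. \<sigma> (int n) * Dfw eps r (int n))"
    by (rule sum_conv[OF per_mult[OF ps per_Dfw[OF pr]]])
  also have "\<dots> = (\<Sum>n<N. (\<sigma> (int n) * r (int n + 1) - \<sigma> (int n) * r (int n)) / eps)"
    by (simp add: Dfw_def algebra_simps)
  also have "\<dots> = ((\<Sum>n<N. \<sigma> (int n) * r (int n + 1)) - (\<Sum>n<N. \<sigma> (int n) * r (int n))) / eps"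
    by (simp add: sum_divide_distrib[symmetric] sum_subtractf)
  also have "\<dots> = (\<Sum>n<N. ((\<sigma> (int n - 1) - \<sigma> (int n)) / eps) * r (int n))"
    unfolding l by (simp add: sum_divide_distrib sum_subtractf[symmetric] algebra_simps)
  finally have lhs: "(\<Sum>i=1..int N. \<sigma> i * Dfw eps r i) = \<dots>" .
  have rhs: "(\<Sum>i=1..int N. f i * r i) = (\<Sum>n<N. f (int n) * r (int n))"
    by (rule sum_conv[OF per_mult[OF pf pr]])
  have "(\<Sum>n<N. ((\<sigma> (int n - 1) - \<sigma> (int n)) / eps) * r (int n)) = (\<Sum>n<N. f (int n) * r (int n))"
    using weak N unfolding inner_X_def lhs[symmetric] rhs[symmetric] by simp
  moreover have "r n * r n = ((\<sigma> (n - 1) - \<sigma> n) / eps) * r n - f n * r n" for n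
  proof -
    have "r n = (\<sigma> (n - 1) - \<sigma> n) / eps - f n" by (simp add: r_def)
    then show ?thesis by (metis left_diff_distrib)
  qed
  ultimately have "(\<Sum>n<N. r (int n) * r (int n)) = 0"
    by (simp add: sum_subtractf)
  then have z: "\<forall>n\<in>{..<N}. r (int n) * r (int n) = 0"
    by (subst sum_nonneg_eq_0_iff[symmetric]) auto
  have "r i = 0"
  proof -
    have ri: "r i = r ((i - 1) mod int N + 1)" by (rule per_rep[OF pr])
    have "r (0 + int N) = r 0" using pr unfolding per_X_def by blast
    then have rN: "r (int N) = r 0" by simp
    have rm: "r (int m) = 0" if "m < N" for m using z that by auto
    show ?thesis
    proof (cases "(i - 1) mod int N + 1 = int N")
      case True
      then show ?thesis using ri rN rm[of 0] N by simp
    next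
      case False
      define j where "j = (i - 1) mod int N + 1"
      have "j \<in> {1..int N}" "j \<noteq> int N" using per_rep_range[OF N] False by (auto simp: j_def)
      then have "nat j < N" "int (nat j) = j" by auto
      then show ?thesis using ri rm[of "nat j"] by (simp add: j_def)
    qed
  qed
  then have "(\<sigma> (i - 1) - \<sigma> i) / eps = f i" by (simp add: r_def)
  moreover have "\<sigma> (i - 1) - \<sigma> i = eps * ((\<sigma> (i - 1) - \<sigma> i) / eps)" using e by simp
  ultimately have "\<sigma> (i - 1) - \<sigma> i = eps * f i" by simp
  then show ?thesis unfolding \<sigma>_def .
qed



lemma sum_Dfw_zero:
  assumes "per_X N g" shows "(\<Sum>n<N. Dfw eps g (int n)) = 0"
proof -
  have "(\<Sum>n<N. Dfw eps g (int n)) = (\<Sum>n<N. g (int (Suc n)) - g (int n)) / eps"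
    by (simp add: Dfw_def sum_divide_distrib add.commute)
  also have "\<dots> = (g (int N) - g (int 0)) / eps" by (subst sum_lessThan_telescope) simp
  also have "\<dots> = 0"
  proof -
    have "g (0 + int N) = g 0" using assms unfolding per_X_def by blast
    then show ?thesis by simp
  qed
  finally show ?thesis .
qed

lemma ts_i: assumes "two_scale N p psi" shows "psi (i + int N + k) j = psi (i + k) j"
proof -
  have "psi (i + int N + k) j = psi ((i + k) + int N) j" by (simp add: algebra_simps)
  also have "\<dots> = psi (i + k) j" using assms by (simp add: two_scale_def)
  finally show ?thesis .
qed

lemma ts_j: assumes "two_scale N p psi" "p dvd N" shows "psi i (j + int N) = psi i j"
proof -
  obtain q where q: "N = p * q" using assms(2) by blast
  have pp: "per_X p (\<lambda>j. psi i j)" using assms(1) by (simp add: per_X_def two_scale_def)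
  have "psi i (j + int q * int p) = psi i j" using per_int_mult[OF pp] by blast
  then show ?thesis using q by (simp add: mult.commute)
qed

lemma Lip_psi:
  assumes N: "0 < N" and p: "0 < p" and e: "0 < eps" and ts: "two_scale N p psi"
    and Li: "Linf_Np N p (D_X eps psi) \<le> C'"
  shows "\<bar>psi (i + 1) j - psi i j\<bar> \<le> eps * C'"
proof -
  define D where "D = D_X eps psi"
  have pi: "per_X N (\<lambda>i. D i j)" for j
    unfolding per_X_def D_def D_X_def
  proof
    fix i
    have "psi (i + int N + 1) j = psi (i + 1) j" using ts_i[OF ts, of i 1] by simp
    moreover have "psi (i + int N) j = psi i j" using ts by (simp add: two_scale_def)
    ultimately show "(psi (i + int N + 1) j - psi (i + int N) j) / eps = (psi (i + 1) j - psi i j) / eps" by simp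
  qed
  have pj: "per_X p (\<lambda>j. D i j)" for i
    using ts unfolding per_X_def D_def D_X_def two_scale_def by simp
  define i' where "i' = (i - 1) mod int N + 1"
  define j' where "j' = (j - 1) mod int p + 1"
  have "D i j = D i' j" using per_rep[OF pi] unfolding i'_def by blast
  also have "\<dots> = D i' j'" using per_rep[OF pj] unfolding j'_def by blast
  finally have Dij: "D i j = D i' j'" .
  have mem: "(i', j') \<in> {1..int N} \<times> {1..int p}"
    using per_rep_range[OF N] per_rep_range[OF p] unfolding i'_def j'_def by blast
  have "\<bar>D i' j'\<bar> \<le> Linf_Np N p D"
    unfolding Linf_Np_def
    by (rule Max_ge) (use mem in \<open>auto intro!: imageI\<close>)
  then have "\<bar>D i j\<bar> \<le> C'" using Li Dij unfolding D_def by simp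
  moreover have "psi (i + 1) j - psi i j = eps * D i j" using e by (simp add: D_def D_X_def)
  ultimately show ?thesis using e by (simp add: abs_mult)
qed



lemma est:
  fixes c C C' eps :: real and p N :: nat and psi :: "int \<Rightarrow> int \<Rightarrow> real" and f u u0 :: "int \<Rightarrow> real"
  assumes c: "0 < c" and p: "0 < p" and N: "0 < N" and Ne: "real N * eps = 1" and pN: "p dvd N"
  and ts: "two_scale N p psi" and bnd: "\<forall>i j. c \<le> psi i j \<and> psi i j \<le> C"
  and Li: "Linf_Np N p (D_X eps psi) \<le> C'"
  and pf: "per_X N f" and af: "avg_X N f = 0"
  and su: "solves N eps (psi_eps psi) f u" and su0: "solves N eps (psi_0 p psi) f u0"
  shows "L2_X N (\<lambda>i. u0 i - u i) \<le> 2 * ((10*p/c + 4*p*C'/c^2) * (1 + C/c)) * eps * L2_X N f"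
proof -
  have e: "0 < eps" using Ne N by (metis mult_pos_pos of_nat_0_less_iff zero_less_mult_pos zero_less_one)
  have eN: "eps = 1 / real N" using Ne N by (simp add: eq_divide_eq mult.commute)
  have ps: "c \<le> psi i j" "psi i j \<le> C" for i j using bnd by auto
  have ppos: "0 < psi i j" for i j using ps(1)[of i j] c by linarith
  have Cc: "c \<le> C" using ps[of 0 0] by linarith
  have Lip: "\<bar>psi (i + 1) j - psi i j\<bar> \<le> eps * C'" for i j by (rule Lip_psi[OF N p e ts Li])
  have C'0: "0 \<le> C'" using Lip[of 0 0] e by (smt (verit) mult_pos_neg)
  define ia where "ia i = 1 / psi i i" for i
  define ib where "ib i = avg_Y p (\<lambda>i j. 1 / psi i j) i" for i
  have ia_b: "1 / C \<le> ia i" "ia i \<le> 1 / c" for i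
    unfolding ia_def using ps[of i i] c by (auto intro: frac_le)
  have ib_pos: "0 < ib i" for i
  proof -
    have "0 < (\<Sum>j=1..int p. 1 / psi i j)" using p ppos by (intro sum_pos) auto
    then show ?thesis using p by (simp add: ib_def avg_Y_def)
  qed
  have pa: "per_X N (psi_eps psi)"
    unfolding per_X_def psi_eps_def
  proof
    fix i
    have "psi (i + int N) (i + int N) = psi i (i + int N)" using ts by (simp add: two_scale_def)
    also have "\<dots> = psi i i" by (rule ts_j[OF ts pN])
    finally show "psi (i + int N) (i + int N) = psi i i" .
  qed
  have pb: "per_X N (psi_0 p psi)"
    using ts by (simp add: per_X_def psi_0_def avg_Y_def two_scale_def)
  have eps0: "eps \<noteq> 0" using e by simp
  define \<sigma> where "\<sigma> i = psi_eps psi i * Dfw eps u i" for i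
  define \<tau> where "\<tau> i = psi_0 p psi i * Dfw eps u0 i" for i
  have eqs: "\<sigma> (i - 1) - \<sigma> i = eps * f i" for i
    unfolding \<sigma>_def by (rule weak_to_strong[OF N eps0 pa pf su])
  have eqt: "\<tau> (i - 1) - \<tau> i = eps * f i" for i
    unfolding \<tau>_def by (rule weak_to_strong[OF N eps0 pb pf su0])
  define \<kappa> where "\<kappa> = \<sigma> 0 - \<tau> 0"
  have st: "\<sigma> i = \<tau> i + \<kappa>" for i
  proof (induction i rule: int_induct[where k=0])
    case base then show ?case by (simp add: \<kappa>_def)
  next
    case (step1 i)
    have "\<sigma> (i + 1 - 1) - \<sigma> (i + 1) = \<tau> (i + 1 - 1) - \<tau> (i + 1)" using eqs[of "i+1"] eqt[of "i+1"] by linarith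
    then show ?case using step1 by simp
  next
    case (step2 i)
    have "\<sigma> (i - 1) - \<sigma> i = \<tau> (i - 1) - \<tau> i" using eqs[of i] eqt[of i] by linarith
    then show ?case using step2 by simp
  qed
  have Du: "Dfw eps u i = (\<tau> i + \<kappa>) * ia i" for i
  proof -
    have "psi i i * Dfw eps u i = \<tau> i + \<kappa>" using st[of i] by (simp add: \<sigma>_def psi_eps_def)
    then show ?thesis using ppos[of i i] unfolding ia_def by (simp add: field_simps)
  qed
  have Du0: "Dfw eps u0 i = \<tau> i * ib i" for i
  proof -
    have "inverse (ib i) * Dfw eps u0 i = \<tau> i" by (simp add: \<tau>_def psi_0_def ib_def)
    then show ?thesis using ib_pos[of i] by (simp add: field_simps)
  qed
  define M where "M = (1 / real N) * (\<Sum>n<N. \<bar>f (int n)\<bar>)"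
  have M0: "0 \<le> M" unfolding M_def by (simp add: sum_nonneg)
  have NM: "(\<Sum>n<N. \<bar>f (int n)\<bar>) = real N * M" unfolding M_def using N by simp
  have pfa: "per_X N (\<lambda>i. \<bar>f i\<bar>)" by (rule per_comp[OF pf])
  have fsh: "(\<Sum>m<N. \<bar>f (int m + 1)\<bar>) = real N * M" using shift_nat[OF pfa] NM by simp
  have fpart: "(\<Sum>m<n. \<bar>f (int m + 1)\<bar>) \<le> real N * M" if "n \<le> N" for n
  proof -
    have "(\<Sum>m<n. \<bar>f (int m + 1)\<bar>) \<le> (\<Sum>m<N. \<bar>f (int m + 1)\<bar>)"
      by (rule sum_mono2) (use that in auto)
    then show ?thesis using fsh by simp
  qed
  have trec: "\<tau> (int n) - \<tau> 0 = - eps * (\<Sum>m<n. f (int m + 1))" for n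
  proof (induction n)
    case (Suc n)
    have "\<tau> (int n + 1 - 1) - \<tau> (int n + 1) = eps * f (int n + 1)" by (rule eqt)
    then show ?case using Suc by (simp add: algebra_simps)
  qed simp
  have tdiff: "\<bar>\<tau> (int n) - \<tau> 0\<bar> \<le> M" if "n \<le> N" for n
  proof -
    have "\<bar>\<tau> (int n) - \<tau> 0\<bar> = eps * \<bar>\<Sum>m<n. f (int m + 1)\<bar>" using trec[of n] e by (simp add: abs_mult)
    also have "\<dots> \<le> eps * (real N * M)"
      by (intro mult_left_mono) (use order.trans[OF sum_abs fpart[OF that]] e in auto)
    also have "\<dots> = M" using Ne by (simp add: algebra_simps)
    finally show ?thesis .
  qed
  have Vb: "(\<Sum>k<n. \<bar>\<tau> (int (Suc k)) - \<tau> (int k)\<bar>) \<le> M" if "n \<le> N" for n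
  proof -
    have "\<bar>\<tau> (int (Suc k)) - \<tau> (int k)\<bar> = eps * \<bar>f (int k + 1)\<bar>" for k
    proof -
      have "\<tau> (int k) - \<tau> (int k + 1) = eps * f (int k + 1)" using eqt[of "int k + 1"] by simp
      then have "\<bar>\<tau> (int k + 1) - \<tau> (int k)\<bar> = eps * \<bar>f (int k + 1)\<bar>"
        using e by (simp add: abs_mult abs_minus_commute)
      then show ?thesis by (simp add: add.commute)
    qed
    then have "(\<Sum>k<n. \<bar>\<tau> (int (Suc k)) - \<tau> (int k)\<bar>) = eps * (\<Sum>k<n. \<bar>f (int k + 1)\<bar>)"
      by (simp add: sum_distrib_left)
    also have "\<dots> \<le> eps * (real N * M)" using fpart[OF that] e by (intro mult_left_mono) auto
    also have "\<dots> = M" using Ne by (simp add: algebra_simps)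
    finally show ?thesis .
  qed
  have pu: "per_X N u" and pu0: "per_X N u0" using su su0 by (auto simp: solves_def)
  have sDu0: "(\<Sum>n<N. \<tau> (int n) * ib (int n)) = 0" using sum_Dfw_zero[OF pu0, of eps] Du0 by simp
  have t0: "\<bar>\<tau> 0\<bar> \<le> M"
  proof (rule ccontr)
    assume "\<not> ?thesis"
    then consider "\<tau> 0 > M" | "\<tau> 0 < - M" by linarith
    then show False
    proof cases
      case 1
      have "0 < (\<Sum>n<N. \<tau> (int n) * ib (int n))"
      proof (rule sum_pos)
        fix n assume "n \<in> {..<N}"
        then have "\<tau> (int n) > 0" using tdiff[of n] 1 by auto
        then show "0 < \<tau> (int n) * ib (int n)" using ib_pos by simp
      qed (use N in auto)
      then show False using sDu0 by simp
    next
      case 2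
      have "0 < (\<Sum>n<N. - (\<tau> (int n) * ib (int n)))"
      proof (rule sum_pos)
        fix n assume "n \<in> {..<N}"
        then have "\<tau> (int n) < 0" using tdiff[of n] 2 by auto
        then show "0 < - (\<tau> (int n) * ib (int n))" using ib_pos[of "int n"] by (simp add: mult_neg_pos)
      qed (use N in auto)
      then show False using sDu0 by (simp add: sum_negf)
    qed
  qed
  have tb: "\<bar>\<tau> (int k)\<bar> \<le> 2 * M" if "k \<le> N" for k
    using tdiff[OF that] t0 by linarith
  define B where "B = 10*p/c + 4*p*C'/c^2"
  define G where "G n = (\<Sum>k<n. \<tau> (int k) * (ib (int k) - ia (int k)))" for n
  have ibsum: "ib i = (\<Sum>j<p. 1 / psi i (int j)) / p" for i
  proof -
    have pj: "per_X p (\<lambda>j. 1 / psi i j)" using ts by (simp add: per_X_def two_scale_def)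
    show ?thesis unfolding ib_def avg_Y_def using sum_conv[OF pj] by simp
  qed
  have Lipi: "\<bar>1 / psi (i + 1) j - 1 / psi i j\<bar> \<le> eps * C' / c^2" for i j
  proof -
    have x: "0 < psi (i+1) j" "0 < psi i j" using ppos by auto
    have "1 / psi (i + 1) j - 1 / psi i j = (psi i j - psi (i+1) j) / (psi (i+1) j * psi i j)"
      using x by (simp add: field_simps)
    then have "\<bar>1 / psi (i + 1) j - 1 / psi i j\<bar> = \<bar>psi (i+1) j - psi i j\<bar> / (psi (i+1) j * psi i j)"
      using x by (simp add: abs_minus_commute)
    also have "\<dots> \<le> eps * C' / c^2"
    proof (rule frac_le)
      show "0 \<le> eps * C'" using e C'0 by simp
      show "\<bar>psi (i+1) j - psi i j\<bar> \<le> eps * C'" by (rule Lip)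
      show "0 < c^2" using c by simp
      show "c^2 \<le> psi (i+1) j * psi i j" unfolding power2_eq_square
        using ps c by (intro mult_mono) (auto intro: order.trans[OF less_imp_le[OF c]])
    qed
    finally show ?thesis .
  qed
  have Gb: "\<bar>G n\<bar> \<le> B * M" if nN: "n \<le> N" for n
  proof -
    have cr: "\<bar>\<Sum>k<n. \<tau> (int k) * ((\<Sum>j<p. 1 / psi (int k) (int j))/p - 1 / psi (int k) (int k))\<bar>
       \<le> 2*real p*(1/c)*(2*(2*M)+M) + 2*real n*real p*(eps*C'/c^2)*(2*M)"
    proof (rule core[where P="\<lambda>k j. 1 / psi (int k) (int j)"])
      show "0 < p" by (rule p)
      show "1 / psi (int s) (int (j + p)) = 1 / psi (int s) (int j)" for s j
        using ts by (simp add: two_scale_def)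
      show "\<bar>1 / psi (int s) (int j)\<bar> \<le> 1 / c" for s j
        using ppos[of "int s" "int j"] ps[of "int s" "int j"] c by (simp add: frac_le)
      show "\<bar>1 / psi (int (Suc s)) (int j) - 1 / psi (int s) (int j)\<bar> \<le> eps * C' / c^2" for s j
        using Lipi[of "int s" "int j"] by (simp add: add.commute)
      show "\<bar>\<tau> (int k)\<bar> \<le> 2 * M" if "k \<le> n" for k using tb that nN by simp
      show "(\<Sum>k<n. \<bar>\<tau> (int (Suc k)) - \<tau> (int k)\<bar>) \<le> M" by (rule Vb[OF nN])
    qed
    have "G n = (\<Sum>k<n. \<tau> (int k) * ((\<Sum>j<p. 1 / psi (int k) (int j))/p - 1 / psi (int k) (int k)))"
      unfolding G_def ibsum ia_def by simp
    then have "\<bar>G n\<bar> \<le> 10*p*M/c + (n*eps) * (4*p*C'*M/c^2)" using cr by (simp add: algebra_simps)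
    also have "\<dots> \<le> 10*p*M/c + 4*p*C'*M/c^2"
    proof -
      have "n * eps \<le> 1" using nN e Ne by (metis mult_right_mono of_nat_le_iff less_imp_le)
      moreover have "0 \<le> 4*p*C'*M/c^2" using C'0 M0 by simp
      moreover have "0 \<le> real n * eps" using e by simp
      ultimately have h: "(real n * eps) * (4*p*C'*M/c^2) \<le> 4*p*C'*M/c^2"
        by (intro mult_left_le_one_le) auto
      then show ?thesis by linarith
    qed
    also have "\<dots> = B * M" unfolding B_def by (simp add: algebra_simps)
    finally show ?thesis .
  qed
  define K where "K = B * (1 + C/c)"
  define S where "S n = (\<Sum>k<n. ia (int k))" for n
  define w where "w i = u0 i - u i" for i
  have B0: "0 \<le> B" unfolding B_def using c C'0 by simp
  have K0: "0 \<le> K" unfolding K_def using B0 c Cc by simp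
  have Dw: "Dfw eps u0 i - Dfw eps u i = \<tau> i * (ib i - ia i) - \<kappa> * ia i" for i
    unfolding Du Du0 by (simp add: algebra_simps)
  have sumDw: "(\<Sum>k<n. Dfw eps u0 (int k) - Dfw eps u (int k)) = G n - \<kappa> * S n" for n
    unfolding Dw G_def S_def by (simp add: sum_subtractf sum_distrib_left)
  have kS: "\<kappa> * S N = G N"
    using sumDw[of N] sum_Dfw_zero[OF pu0, of eps] sum_Dfw_zero[OF pu, of eps] by (simp add: sum_subtractf)
  have Sup: "S n \<le> real n / c" for n
  proof -
    have "S n \<le> (\<Sum>k<n. 1 / c)" unfolding S_def by (rule sum_mono) (rule ia_b(2))
    then show ?thesis by simp
  qed
  have Slow: "real N / C \<le> S N"
  proof -
    have "(\<Sum>k<N. 1 / C) \<le> S N" unfolding S_def by (rule sum_mono) (rule ia_b(1))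
    then show ?thesis by simp
  qed
  have S0: "0 \<le> S n" for n unfolding S_def using ia_b c Cc
    by (intro sum_nonneg) (smt (verit) divide_pos_pos)
  have SnN: "S n \<le> (C/c) * S N" if "n \<le> N" for n
  proof -
    have "S n \<le> real N / c" using Sup[of n] that c by (smt (verit) divide_right_mono of_nat_le_iff)
    also have "\<dots> = (C/c) * (real N / C)" using c Cc by (simp add: field_simps)
    also have "\<dots> \<le> (C/c) * S N" using Slow c Cc by (intro mult_left_mono) auto
    finally show ?thesis .
  qed
  have kSn: "\<bar>\<kappa> * S n\<bar> \<le> (C/c) * (B * M)" if "n \<le> N" for n
  proof -
    have "\<bar>\<kappa> * S n\<bar> = \<bar>\<kappa>\<bar> * S n" using S0[of n] by (simp add: abs_mult)
    also have "\<dots> \<le> \<bar>\<kappa>\<bar> * ((C/c) * S N)" using SnN[OF that] by (intro mult_left_mono) auto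
    also have "\<dots> = (C/c) * \<bar>\<kappa> * S N\<bar>" using S0[of N] by (simp add: abs_mult algebra_simps)
    also have "\<dots> \<le> (C/c) * (B * M)" unfolding kS using Gb[of N] c Cc by (intro mult_left_mono) auto
    finally show ?thesis .
  qed
  have wdiff: "\<bar>w (int n) - w 0\<bar> \<le> eps * K * M" if "n \<le> N" for n
  proof -
    have "(\<Sum>k<n. Dfw eps u0 (int k) - Dfw eps u (int k)) = (\<Sum>k<n. w (int (Suc k)) - w (int k)) / eps"
      unfolding sum_divide_distrib
    proof (rule sum.cong)
      fix k
      show "Dfw eps u0 (int k) - Dfw eps u (int k) = (w (int (Suc k)) - w (int k)) / eps"
        unfolding w_def Dfw_def diff_divide_distrib[symmetric] by (simp add: algebra_simps)
    qed simp
    also have "\<dots> = (w (int n) - w 0) / eps" by (subst sum_lessThan_telescope) simp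
    finally have "w (int n) - w 0 = eps * (G n - \<kappa> * S n)" using sumDw[of n] e by (simp add: field_simps)
    then have "\<bar>w (int n) - w 0\<bar> = eps * \<bar>G n - \<kappa> * S n\<bar>" using e by (simp add: abs_mult)
    also have "\<dots> \<le> eps * (B * M + (C/c) * (B * M))"
      using Gb[OF that] kSn[OF that] e by (intro mult_left_mono) (auto intro: order.trans[OF abs_triangle_ineq4])
    also have "\<dots> = eps * K * M" unfolding K_def by (simp add: algebra_simps)
    finally show ?thesis .
  qed
  have pw: "per_X N w" unfolding w_def by (rule per_diff[OF pu0 pu])
  have z0: "(\<Sum>n<N. u0 (int n)) = 0"
  proof -
    have "(\<Sum>i=1..int N. u0 i) = 0" using su0 N by (simp add: solves_def avg_X_def)
    then show ?thesis using sum_conv[OF pu0] by simp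
  qed
  have z1: "(\<Sum>n<N. u (int n)) = 0"
  proof -
    have "(\<Sum>i=1..int N. u i) = 0" using su N by (simp add: solves_def avg_X_def)
    then show ?thesis using sum_conv[OF pu] by simp
  qed
  have wsum: "(\<Sum>n<N. w (int n)) = 0" unfolding w_def using z0 z1 by (simp add: sum_subtractf)
  have w0: "\<bar>w 0\<bar> \<le> eps * K * M"
  proof -
    have "real N * w 0 = (\<Sum>n<N. w 0 - w (int n))" using wsum by (simp add: sum_subtractf)
    then have "real N * \<bar>w 0\<bar> = \<bar>\<Sum>n<N. w 0 - w (int n)\<bar>" by (metis abs_mult abs_of_nat)
    also have "\<dots> \<le> (\<Sum>n<N. \<bar>w 0 - w (int n)\<bar>)" by (rule sum_abs)
    also have "\<dots> = (\<Sum>n<N. \<bar>w (int n) - w 0\<bar>)" by (simp add: abs_minus_commute)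
    also have "\<dots> \<le> (\<Sum>n<N. eps * K * M)" by (rule sum_mono) (use wdiff in auto)
    also have "\<dots> = real N * (eps * K * M)" by simp
    finally show ?thesis using N by simp
  qed
  define E where "E = 2 * eps * K * M"
  have E0: "0 \<le> E" unfolding E_def using e K0 M0 by simp
  have wb: "\<bar>w (int n)\<bar> \<le> E" if "n < N" for n
    using wdiff[of n] w0 that unfolding E_def by linarith
  have L2w: "L2_X N w \<le> E"
  proof -
    have "(\<Sum>i=1..int N. \<bar>w i\<bar>^2) = (\<Sum>n<N. \<bar>w (int n)\<bar>^2)"
      by (rule sum_conv[OF per_comp[OF pw]])
    also have "\<dots> \<le> (\<Sum>n<N. E^2)"
    proof (rule sum_mono)
      fix n assume "n \<in> {..<N}"
      then have "\<bar>w (int n)\<bar> \<le> E" using wb by simp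
      then show "\<bar>w (int n)\<bar>^2 \<le> E^2" by (rule power_mono) simp
    qed
    also have "\<dots> = real N * E^2" by simp
    finally have "(1 / real N) * (\<Sum>i=1..int N. \<bar>w i\<bar>^2) \<le> E^2" using N by (simp add: divide_le_eq mult.commute)
    then have "L2_X N w \<le> sqrt (E^2)" unfolding L2_X_def by (rule real_sqrt_le_mono)
    then show ?thesis using E0 by simp
  qed
  have hML: "M \<le> L2_X N f"
  proof -
    have "0 \<le> (\<Sum>n<N. (\<bar>f (int n)\<bar> - M)^2)" by (simp add: sum_nonneg)
    also have "\<dots> = (\<Sum>n<N. \<bar>f (int n)\<bar>^2) - 2 * M * (\<Sum>n<N. \<bar>f (int n)\<bar>) + real N * M^2"
      by (simp add: power2_diff sum.distrib sum_subtractf sum_distrib_left algebra_simps)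
    finally have "real N * M^2 \<le> (\<Sum>n<N. \<bar>f (int n)\<bar>^2)" unfolding NM by (simp add: power2_eq_square mult.commute mult.left_commute)
    also have "\<dots> = (\<Sum>i=1..int N. \<bar>f i\<bar>^2)" by (rule sum_conv[OF per_comp[OF pf], symmetric])
    finally have "M^2 \<le> (1 / real N) * (\<Sum>i=1..int N. \<bar>f i\<bar>^2)" using N by (simp add: le_divide_eq mult.commute)
    then have "sqrt (M^2) \<le> L2_X N f" unfolding L2_X_def by (rule real_sqrt_le_mono)
    then show ?thesis using M0 by simp
  qed
  have "L2_X N (\<lambda>i. u0 i - u i) \<le> E" using L2w unfolding w_def .
  also have "\<dots> = (2 * K) * eps * M" unfolding E_def by simp
  also have "\<dots> \<le> (2 * K) * eps * L2_X N f" using hML K0 e by (intro mult_left_mono) auto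
  finally show ?thesis unfolding K_def B_def .
qed


theorem theorem4p6:
  fixes c_psi C_psi C'_psi :: real and p :: nat
  assumes "0 < c_psi" and "0 < p"
  shows "\<exists>C3::real. \<forall>(N::nat) (eps::real) (psi::int \<Rightarrow> int \<Rightarrow> real)
            (f::int \<Rightarrow> real) (u::int \<Rightarrow> real) (u0::int \<Rightarrow> real).
     0 < N \<longrightarrow> real N * eps = 1 \<longrightarrow> p dvd N \<longrightarrow>
     two_scale N p psi \<longrightarrow>
     (\<forall>i j. c_psi \<le> psi i j \<and> psi i j \<le> C_psi) \<longrightarrow>
     Linf_Np N p (D_X eps psi) \<le> C'_psi \<longrightarrow>
     per_X N f \<longrightarrow> avg_X N f = 0 \<longrightarrow>
     solves N eps (psi_eps psi) f u \<longrightarrow>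
     solves N eps (psi_0 p psi) f u0 \<longrightarrow>
     L2_X N (\<lambda>i. u0 i - u i) \<le> C3 * eps * L2_X N f"
proof (rule exI[of _ "2 * ((10*p/c_psi + 4*p*C'_psi/c_psi^2) * (1 + C_psi/c_psi))"], intro allI impI)
  fix N :: nat and eps :: real and psi :: "int \<Rightarrow> int \<Rightarrow> real" and f u u0 :: "int \<Rightarrow> real"
  assume h: "0 < N" "real N * eps = 1" "p dvd N" "two_scale N p psi"
    "\<forall>i j. c_psi \<le> psi i j \<and> psi i j \<le> C_psi" "Linf_Np N p (D_X eps psi) \<le> C'_psi"
    "per_X N f" "avg_X N f = 0" "solves N eps (psi_eps psi) f u" "solves N eps (psi_0 p psi) f u0"
  show "L2_X N (\<lambda>i. u0 i - u i) \<le> 2 * ((10*p/c_psi + 4*p*C'_psi/c_psi^2) * (1 + C_psi/c_psi)) * eps * L2_X N f"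
    by (rule est[OF assms(1) assms(2) h])
qed

end
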